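(* Assume $\Phi^{y,\dagger}\in L^1_{\mu_\theta}$ and $\Phi^{y,\mathrm{joint}}\in L^1_{\mu_\theta\otimes\mu_\delta}$. Then $$\max\{d_{\mathrm{KL}}(\mu^{y,\dagger}_{\theta,\delta}\Vert\mu^{y,\mathrm{joint}}_{\theta,\delta}),d_{\mathrm{KL}}(\mu^{y,\mathrm{joint}}_{\theta,\delta}\Vert\mu^{y,\dagger}_{\theta,\delta})\}\le C\Big\|\,|\mathcal{O}(\delta^\dagger-\delta)(\theta)|^2_{\Sigma_\varepsilon^{-1}}\Big\|^{1/2}_{L^1_{\mathbb{P}}},$$ where $C=2^{1/2}\exp\big(2\|\Phi^{y,\mathrm{joint}}\|_{L^1_{\mu_\theta\otimes\mu_\delta}}+2\|\Phi^{y,\dagger}\|_{L^1_{\mu_\theta}}\big)\big(\|\Phi^{y,\mathrm{joint}}\|^{1/2}_{L^1_{\mu_\theta\otimes\mu_\delta}}+\|\Phi^{y,\dagger}\|^{1/2}_{L^1_{\mu_\theta}}\big)$.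
   Context: Let $\Theta$ be a Borel subset of a separable Banach space and $\mu_\theta$ a Borel probability measure on $\Theta$. Let $\mathcal{U}$ be a Banach space, $n\in\mathbb{N}$, $\mathcal{O}:\mathcal{U}\to\mathbb{R}^n$ continuous linear, $\mathcal{M}^\dagger,\mathcal{M}:\Theta\to\mathcal{U}$ measurable, $\delta^\dagger:=\mathcal{M}^\dagger-\mathcal{M}$. Let $\Sigma_\varepsilon\in\mathbb{R}^{n\times n}$ be symmetric positive definite, $y\in\mathbb{R}^n$ fixed, $|a|_L:=(a^\top La)^{1/2}$. Let $\Delta$ be a Radon space whose elements $\delta'$ are maps $\Theta\to\mathcal{U}$ with $(\theta',\delta')\mapsto\delta'(\theta')$ jointly measurable, and $\mu_\delta$ a Borel probability measure on $\Delta$. Misfits: $\Phi^{y,\dagger}(\theta')=\tfrac12|y-\mathcal{O}\mathcal{M}^\dagger(\theta')|^2_{\Sigma_\varepsilon^{-1}}$, lifted to $\Theta\times\Delta$ by $\Phi^{y,\dagger}(\theta',\delta'):=\Phi^{y,\dagger}(\theta')$; $\Phi^{y,\mathrm{joint}}(\theta',\delta')=\tfrac12|y-\mathcal{O}\mathcal{M}(\theta')-\mathcal{O}\delta'(\theta')|^2_{\Sigma_\varepsilon^{-1}}$. For a probability measure $\mu$ and measurable $\Phi\ge0$, $\mu_\Phi$ has density $\exp(-\Phi)/\int\exp(-\Phi)d\mu$ w.r.t. $\mu$. $\mu^{y,\dagger}_{\theta,\delta}:=(\mu_\theta\otimes\mu_\delta)_{\Phi^{y,\dagger}}$ and $\mu^{y,\mathrm{joint}}_{\theta,\delta}:=(\mu_\theta\otimes\mu_\delta)_{\Phi^{y,\mathrm{joint}}}$.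 $\theta\sim\mu_\theta$, $\delta\sim\mu_\delta$ independent under $\mathbb{P}$, so $\|F(\theta,\delta)\|_{L^1_{\mathbb{P}}}=\int|F|\,d(\mu_\theta\otimes\mu_\delta)$. $d_{\mathrm{KL}}(\mu\Vert\nu)=\int\log\frac{d\mu}{d\nu}d\mu$ if $\mu\ll\nu$, $+\infty$ otherwise. *)

theory Defs
  imports "HOL-Probability.Probability"
begin

definition wnorm :: "real^'n^'n \<Rightarrow> real^'n \<Rightarrow> real" where
  "wnorm L a = sqrt (a \<bullet> (L *v a))"

definition spd :: "real^'n^'n \<Rightarrow> bool" where
  "spd S \<longleftrightarrow> transpose S = S \<and> (\<forall>x. x \<noteq> 0 \<longrightarrow> x \<bullet> (S *v x) > 0)"

definition reweight :: "'a measure \<Rightarrow> ('a \<Rightarrow> real) \<Rightarrow> 'a measure" where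
  "reweight \<mu> \<Phi> = density \<mu> (\<lambda>x. ennreal (exp (- \<Phi> x) / (\<integral>z. exp (- \<Phi> z) \<partial>\<mu>)))"

text \<open>For probability measures the negative part of the integrand is always integrable, so
  non-integrability means the integral is +infinity.\<close>
definition dKL :: "'a measure \<Rightarrow> 'a measure \<Rightarrow> ereal" where
  "dKL \<mu> \<nu> =
     (if sets \<mu> = sets \<nu> \<and> absolutely_continuous \<nu> \<mu>
         \<and> integrable \<mu> (\<lambda>x. ln (enn2real (RN_deriv \<nu> \<mu> x)))
      then ereal (\<integral>x. ln (enn2real (RN_deriv \<nu> \<mu> x)) \<partial>\<mu>)
      else \<infinity>)"

end

theory Submission
  imports Defs
begin


lemma pw_bound:
  fixes p1 p2 :: real
  assumes "p1 \<ge> 0" "p2 \<ge> 0"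
  shows "exp (-p1) * (p2 - p1) + exp (-p2) - exp (-p1) \<le> \<bar>p1 - p2\<bar>"
proof (cases "p2 \<ge> p1")
  case True
  have "exp (-p2) \<le> exp (-p1)" using True by simp
  moreover have "exp (-p1) \<le> 1" using assms by simp
  moreover have "exp (-p1) * (p2 - p1) \<le> p2 - p1"
    using True \<open>exp (-p1) \<le> 1\<close> mult_right_mono[of "exp (-p1)" 1 "p2 - p1"] by auto
  moreover have "\<bar>p1 - p2\<bar> = p2 - p1" using True by simp
  ultimately show ?thesis by linarith
next
  case False
  have a: "exp (-p1) * (p2 - p1) \<le> 0" using False by (simp add: mult_nonneg_nonpos)
  have "exp (-p2) - exp (-p1) = exp (-p2) * (1 - exp (-(p1 - p2)))"
    by (simp add: algebra_simps flip: exp_add)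
  also have "\<dots> \<le> 1 * (p1 - p2)"
  proof (rule mult_mono)
    show "exp (-p2) \<le> 1" using assms by simp
    show "1 - exp (-(p1 - p2)) \<le> p1 - p2" using exp_ge_add_one_self[of "-(p1-p2)"] by linarith
  qed (use False in auto)
  finally show ?thesis using a False by simp
qed

lemma Z_lower:
  fixes \<mu> :: "'a measure" and P :: "'a \<Rightarrow> real"
  assumes "prob_space \<mu>" "integrable \<mu> P" "\<And>x. P x \<ge> 0"
  shows "exp (- (\<integral>x. P x \<partial>\<mu>)) \<le> (\<integral>x. exp (- P x) \<partial>\<mu>)"
proof -
  interpret prob_space \<mu> by fact
  define c where "c = (\<integral>x. P x \<partial>\<mu>)"
  have [measurable]: "P \<in> borel_measurable \<mu>" using assms(2) by auto
  have ie: "integrable \<mu> (\<lambda>x. exp (- P x))"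
    by (rule integrable_const_bound[where B=1]) (auto simp: assms(3))
  have "(\<integral>x. exp (-c) * (1 - (P x - c)) \<partial>\<mu>) = exp (-c) * (1 - (c - c))"
    using assms(2) by (simp add: c_def integral_diff prob_space)
  hence "exp (-c) = (\<integral>x. exp (-c) * (1 - (P x - c)) \<partial>\<mu>)" by simp
  also have "\<dots> \<le> (\<integral>x. exp (- P x) \<partial>\<mu>)"
  proof (rule integral_mono)
    show "integrable \<mu> (\<lambda>x. exp (-c) * (1 - (P x - c)))" using assms(2) by auto
    show "integrable \<mu> (\<lambda>x. exp (- P x))" by (fact ie)
    fix x
    have "exp (- P x) = exp (-c) * exp (c - P x)" by (simp flip: exp_add)
    moreover have "1 - (P x - c) \<le> exp (c - P x)" using exp_ge_add_one_self[of "c - P x"] by linarith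
    ultimately show "exp (-c) * (1 - (P x - c)) \<le> exp (- P x)" by simp
  qed
  finally show ?thesis by (simp add: c_def)
qed


lemma KL_bound:
  fixes \<mu> :: "'a measure" and P1 P2 :: "'a \<Rightarrow> real"
  assumes prob: "prob_space \<mu>" and i1: "integrable \<mu> P1" and i2: "integrable \<mu> P2"
    and n1: "\<And>x. P1 x \<ge> 0" and n2: "\<And>x. P2 x \<ge> 0"
  shows "dKL (reweight \<mu> P1) (reweight \<mu> P2)
           \<le> ereal (exp (\<integral>x. P1 x \<partial>\<mu>) * (\<integral>x. \<bar>P1 x - P2 x\<bar> \<partial>\<mu>))"
proof -
  interpret prob_space \<mu> by fact
  have [measurable]: "P1 \<in> borel_measurable \<mu>" "P2 \<in> borel_measurable \<mu>" using i1 i2 by auto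
  have ie1: "integrable \<mu> (\<lambda>x. exp (- P1 x))"
    by (rule integrable_const_bound[where B=1]) (auto simp: n1)
  have ie2: "integrable \<mu> (\<lambda>x. exp (- P2 x))"
    by (rule integrable_const_bound[where B=1]) (auto simp: n2)
  define c where "c = (\<integral>x. P1 x \<partial>\<mu>)"
  define Z1 where "Z1 = (\<integral>x. exp (- P1 x) \<partial>\<mu>)"
  define Z2 where "Z2 = (\<integral>x. exp (- P2 x) \<partial>\<mu>)"
  have Z1lb: "exp (- c) \<le> Z1" unfolding c_def Z1_def by (rule Z_lower[OF prob i1 n1])
  have Z2lb: "exp (- (\<integral>x. P2 x \<partial>\<mu>)) \<le> Z2" unfolding Z2_def by (rule Z_lower[OF prob i2 n2])
  have Z1p: "Z1 > 0" using Z1lb by (meson exp_gt_zero less_le_trans)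
  have Z2p: "Z2 > 0" using Z2lb by (meson exp_gt_zero less_le_trans)
  define f1 where "f1 x = exp (- P1 x) / Z1" for x
  define f2 where "f2 x = exp (- P2 x) / Z2" for x
  define h where "h x = f1 x / f2 x" for x
  have [measurable]: "f1 \<in> borel_measurable \<mu>" "f2 \<in> borel_measurable \<mu>" "h \<in> borel_measurable \<mu>"
    unfolding f1_def f2_def h_def by measurable
  have f1p: "f1 x > 0" for x using Z1p by (simp add: f1_def)
  have f2p: "f2 x > 0" for x using Z2p by (simp add: f2_def)
  define \<mu>1 where "\<mu>1 = reweight \<mu> P1"
  define \<mu>2 where "\<mu>2 = reweight \<mu> P2"
  have mu1: "\<mu>1 = density \<mu> (\<lambda>x. ennreal (f1 x))"
    unfolding \<mu>1_def reweight_def f1_def Z1_def ..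
  have mu2: "\<mu>2 = density \<mu> (\<lambda>x. ennreal (f2 x))"
    unfolding \<mu>2_def reweight_def f2_def Z2_def ..
  have sets1: "sets \<mu>1 = sets \<mu>" and sets2: "sets \<mu>2 = sets \<mu>" by (simp_all add: mu1 mu2)
  have pw: "ennreal (f2 x) * ennreal (h x) = ennreal (f1 x)" for x
  proof -
    have "ennreal (f2 x) * ennreal (h x) = ennreal (f2 x * h x)"
      using f1p[of x] f2p[of x] by (subst ennreal_mult) (auto simp: h_def less_imp_le)
    also have "f2 x * h x = f1 x" using f2p[of x] by (simp add: h_def)
    finally show ?thesis .
  qed
  have dd: "density \<mu>2 (\<lambda>x. ennreal (h x)) = \<mu>1"
    unfolding mu2 mu1
    by (subst density_density_eq) (auto intro!: density_cong simp: pw)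
  have int_f1: "(\<integral>x. f1 x \<partial>\<mu>) = 1"
    unfolding f1_def using Z1p by (simp add: Z1_def)
  have int_f2: "(\<integral>x. f2 x \<partial>\<mu>) = 1"
    unfolding f2_def using Z2p by (simp add: Z2_def)
  have fin2: "finite_measure \<mu>2"
  proof
    have "emeasure \<mu>2 (space \<mu>2) = (\<integral>\<^sup>+x. ennreal (f2 x) \<partial>\<mu>)"
      by (simp add: mu2 emeasure_density)
    also have "\<dots> = ennreal (\<integral>x. f2 x \<partial>\<mu>)"
      using f2p by (intro nn_integral_eq_integral) (auto simp: f2_def intro!: integrable_divide ie2 less_imp_le)
    finally show "emeasure \<mu>2 (space \<mu>2) \<noteq> \<infinity>" by simp
  qed
  have hm2: "(\<lambda>x. ennreal (h x)) \<in> borel_measurable \<mu>2"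
  proof -
    have "(\<lambda>x. ennreal (h x)) \<in> borel_measurable \<mu>" by measurable
    then show ?thesis by (simp add: measurable_cong_sets[OF sets2 refl])
  qed
  have ac: "absolutely_continuous \<mu>2 \<mu>1"
    unfolding dd[symmetric] by (rule absolutely_continuousI_density) (fact hm2)
  have RN: "AE x in \<mu>2. ennreal (h x) = RN_deriv \<mu>2 \<mu>1 x"
    by (rule sigma_finite_measure.RN_deriv_unique[OF finite_measure.sigma_finite_measure[OF fin2] _ dd])
       (fact hm2)
  define g where "g x = P2 x - P1 x + ln Z2 - ln Z1" for x
  have hg: "h x = exp (g x)" for x
    unfolding h_def f1_def f2_def g_def using Z1p Z2p
    by (simp add: exp_add exp_diff exp_minus field_simps)
  have AEg: "AE x in \<mu>1. ln (enn2real (RN_deriv \<mu>2 \<mu>1 x)) = g x"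
  proof -
    have "AE x in \<mu>1. ennreal (h x) = RN_deriv \<mu>2 \<mu>1 x"
      by (rule absolutely_continuous_AE[OF _ ac RN]) (simp add: sets1 sets2)
    then show ?thesis
    proof eventually_elim
      case (elim x)
      then have "RN_deriv \<mu>2 \<mu>1 x = ennreal (exp (g x))" by (simp add: hg)
      then show ?case by simp
    qed
  qed
  have ig: "integrable \<mu> g" unfolding g_def using i1 i2 by auto
  have if1g: "integrable \<mu> (\<lambda>x. f1 x * g x)"
  proof (rule Bochner_Integration.integrable_bound[where f="\<lambda>x. g x / Z1"])
    show "integrable \<mu> (\<lambda>x. g x / Z1)" using ig by auto
    show "(\<lambda>x. f1 x * g x) \<in> borel_measurable \<mu>" unfolding g_def by measurable
    show "AE x in \<mu>. norm (f1 x * g x) \<le> norm (g x / Z1)"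
    proof (intro AE_I2)
      fix x
      have "f1 x \<le> 1 / Z1" using n1[of x] Z1p by (simp add: f1_def divide_right_mono)
      then show "norm (f1 x * g x) \<le> norm (g x / Z1)"
        using f1p[of x] Z1p mult_right_mono[of "f1 x" "1/Z1" "\<bar>g x\<bar>"] by (simp add: abs_mult)
    qed
  qed
  have gm: "g \<in> borel_measurable \<mu>" using ig by auto
  have gm1: "g \<in> borel_measurable \<mu>1" using gm by (simp add: measurable_cong_sets[OF sets1 refl])
  have f1m: "f1 \<in> borel_measurable \<mu>" by measurable
  have f1AE: "AE x in \<mu>. 0 \<le> f1 x" using f1p by (simp add: less_imp_le)
  have intg1: "integrable \<mu>1 g"
    unfolding mu1 using integrable_density[OF gm f1m f1AE] if1g by simp
  have RNm: "RN_deriv \<mu>2 \<mu>1 \<in> borel_measurable \<mu>1"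
  proof -
    have "RN_deriv \<mu>2 \<mu>1 \<in> borel_measurable \<mu>2" by (rule borel_measurable_RN_deriv)
    then show ?thesis by (simp only: measurable_cong_sets[OF sets1 refl] measurable_cong_sets[OF sets2 refl])
  qed
  have lnm: "(\<lambda>x. ln (enn2real (RN_deriv \<mu>2 \<mu>1 x))) \<in> borel_measurable \<mu>1"
    using RNm by measurable
  have intKL: "integrable \<mu>1 (\<lambda>x. ln (enn2real (RN_deriv \<mu>2 \<mu>1 x)))"
    using integrable_cong_AE[OF lnm gm1 AEg] intg1 by simp
  have valKL: "(\<integral>x. ln (enn2real (RN_deriv \<mu>2 \<mu>1 x)) \<partial>\<mu>1) = (\<integral>x. f1 x * g x \<partial>\<mu>)"
  proof -
    have "(\<integral>x. ln (enn2real (RN_deriv \<mu>2 \<mu>1 x)) \<partial>\<mu>1) = (\<integral>x. g x \<partial>\<mu>1)"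
      by (rule integral_cong_AE[OF lnm gm1 AEg])
    also have "\<dots> = (\<integral>x. f1 x * g x \<partial>\<mu>)"
      unfolding mu1 using integral_density[OF gm f1m f1AE] by simp
    finally show ?thesis .
  qed
  have KLeq: "dKL \<mu>1 \<mu>2 = ereal (\<integral>x. f1 x * g x \<partial>\<mu>)"
    unfolding dKL_def using sets1 sets2 ac intKL valKL by simp
  have iA: "integrable \<mu> (\<lambda>x. exp (- P1 x) * (P2 x - P1 x))"
  proof (rule Bochner_Integration.integrable_bound[where f="\<lambda>x. P2 x - P1 x"])
    show "integrable \<mu> (\<lambda>x. P2 x - P1 x)" using i1 i2 by auto
    show "(\<lambda>x. exp (- P1 x) * (P2 x - P1 x)) \<in> borel_measurable \<mu>" by measurable
    show "AE x in \<mu>. norm (exp (- P1 x) * (P2 x - P1 x)) \<le> norm (P2 x - P1 x)"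
    proof (intro AE_I2)
      fix x
      have "exp (- P1 x) \<le> 1" using n1[of x] by simp
      then show "norm (exp (- P1 x) * (P2 x - P1 x)) \<le> norm (P2 x - P1 x)"
        using mult_right_mono[of "exp (- P1 x)" 1 "\<bar>P2 x - P1 x\<bar>"] by (simp add: abs_mult)
    qed
  qed
  define A where "A = (\<integral>x. exp (- P1 x) * (P2 x - P1 x) \<partial>\<mu>)"
  define X where "X = (\<integral>x. \<bar>P1 x - P2 x\<bar> \<partial>\<mu>)"
  have if1: "integrable \<mu> f1" unfolding f1_def using ie1 by auto
  have "(\<integral>x. f1 x * g x \<partial>\<mu>) = (\<integral>x. exp (- P1 x) * (P2 x - P1 x) / Z1 + f1 x * (ln Z2 - ln Z1) \<partial>\<mu>)"
    by (rule Bochner_Integration.integral_cong) (insert Z1p, auto simp: f1_def g_def field_simps)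
  also have "\<dots> = A / Z1 + (\<integral>x. f1 x \<partial>\<mu>) * (ln Z2 - ln Z1)"
    using iA if1 by (simp add: A_def)
  also have "\<dots> = A / Z1 + (ln Z2 - ln Z1)" using int_f1 by simp
  finally have val: "(\<integral>x. f1 x * g x \<partial>\<mu>) = A / Z1 + (ln Z2 - ln Z1)" .
  have "A + Z2 - Z1 = (\<integral>x. exp (- P1 x) * (P2 x - P1 x) + exp (- P2 x) - exp (- P1 x) \<partial>\<mu>)"
    using iA ie1 ie2 by (simp add: A_def Z1_def Z2_def)
  also have "\<dots> \<le> X"
    unfolding X_def
  proof (rule integral_mono)
    show "integrable \<mu> (\<lambda>x. exp (- P1 x) * (P2 x - P1 x) + exp (- P2 x) - exp (- P1 x))"
      using iA ie1 ie2 by auto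
    show "integrable \<mu> (\<lambda>x. \<bar>P1 x - P2 x\<bar>)" using i1 i2 by auto
    show "exp (- P1 x) * (P2 x - P1 x) + exp (- P2 x) - exp (- P1 x) \<le> \<bar>P1 x - P2 x\<bar>" for x
      by (rule pw_bound[OF n1 n2])
  qed
  finally have AX: "A + Z2 - Z1 \<le> X" .
  have X0: "X \<ge> 0" unfolding X_def by simp
  have lnb: "ln Z2 - ln Z1 \<le> Z2 / Z1 - 1"
    using ln_le_minus_one[of "Z2/Z1"] Z1p Z2p by (simp add: ln_div)
  have "A / Z1 + (ln Z2 - ln Z1) \<le> A / Z1 + (Z2 / Z1 - 1)" using lnb by simp
  also have "\<dots> = (A + Z2 - Z1) / Z1" using Z1p by (simp add: field_simps)
  also have "\<dots> \<le> X / Z1" using AX Z1p by (simp add: divide_right_mono)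
  also have "\<dots> \<le> X * exp c"
  proof -
    have "1 / Z1 \<le> 1 / exp (- c)" using Z1lb by (simp add: frac_le)
    hence "1 / Z1 \<le> exp c" by (simp add: exp_minus divide_inverse)
    thus ?thesis using X0 mult_left_mono[of "1/Z1" "exp c" X] by simp
  qed
  finally have "A / Z1 + (ln Z2 - ln Z1) \<le> exp c * X" by (simp add: mult.commute)
  then show ?thesis
    using KLeq val by (simp add: \<mu>1_def \<mu>2_def c_def X_def)
qed



lemma spd_inv_props:
  fixes S :: "real^'n^'n"
  assumes "spd S"
  shows "\<And>v. v \<bullet> (matrix_inv S *v v) \<ge> 0"
    and "\<And>u v. u \<bullet> (matrix_inv S *v v) = v \<bullet> (matrix_inv S *v u)"
proof -
  have symS: "transpose S = S" and pd: "\<And>x. x \<noteq> 0 \<Longrightarrow> x \<bullet> (S *v x) > 0"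
    using assms unfolding spd_def by auto
  have "\<forall>x. S *v x = 0 \<longrightarrow> x = 0"
  proof (intro allI impI)
    fix x assume "S *v x = 0"
    then have "x \<bullet> (S *v x) = 0" by simp
    then show "x = 0" using pd[of x] by (cases "x = 0") auto
  qed
  then obtain B :: "real^'n^'n" where "B ** S = mat 1" using matrix_left_invertible_ker by blast
  then have inv: "invertible S" using invertible_left_inverse by blast
  define L where "L = matrix_inv S"
  have LS: "S ** L = mat 1 \<and> L ** S = mat 1"
    unfolding L_def matrix_inv_def using inv unfolding invertible_def by (rule someI_ex)
  have "transpose (L ** S) = mat 1" using LS by (simp add: transpose_mat)
  then have SLt: "S ** transpose L = mat 1" by (simp add: matrix_transpose_mul symS)
  have "transpose L = (L ** S) ** transpose L" using LS by (simp add: matrix_mul_lid)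
  also have "\<dots> = L" by (simp add: matrix_mul_assoc[symmetric] SLt matrix_mul_rid)
  finally have symL: "transpose L = L" .
  show "u \<bullet> (matrix_inv S *v v) = v \<bullet> (matrix_inv S *v u)" for u v
  proof -
    have "u \<bullet> (L *v v) = (u v* L) \<bullet> v" by (simp add: dot_lmul_matrix)
    also have "u v* L = transpose L *v u" by simp
    also have "\<dots> = L *v u" by (simp add: symL)
    finally show ?thesis by (simp add: L_def inner_commute)
  qed
  show "v \<bullet> (matrix_inv S *v v) \<ge> 0" for v
  proof -
    define w where "w = L *v v"
    have "S *v w = v" using LS by (simp add: w_def matrix_vector_mul_assoc)
    then have "v \<bullet> (L *v v) = w \<bullet> (S *v w)" by (simp add: w_def inner_commute)
    also have "\<dots> \<ge> 0" using pd[of w] by (cases "w = 0") auto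
    finally show ?thesis by (simp add: L_def)
  qed
qed

lemma quad_bound:
  fixes L :: "real^'n^'n"
  assumes psd: "\<And>v. v \<bullet> (L *v v) \<ge> 0"
    and sym: "\<And>u v. u \<bullet> (L *v v) = v \<bullet> (L *v u)"
    and t: "t > 0"
  shows "\<bar>a \<bullet> (L *v a) - b \<bullet> (L *v b)\<bar>
     \<le> (t * ((a - b) \<bullet> (L *v (a - b))) + (2 * (a \<bullet> (L *v a)) + 2 * (b \<bullet> (L *v b))) / t) / 2"
proof -
  define u where "u = a - b"
  define w where "w = a + b"
  define uu where "uu = u \<bullet> (L *v u)"
  define ww where "ww = w \<bullet> (L *v w)"
  define uw where "uw = u \<bullet> (L *v w)"
  have sab: "b \<bullet> (L *v a) = a \<bullet> (L *v b)" by (rule sym)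
  have I1: "a \<bullet> (L *v a) - b \<bullet> (L *v b) = uw"
    unfolding uw_def u_def w_def
    by (simp add: matrix_vector_right_distrib matrix_vector_mult_diff_distrib inner_add_left inner_add_right inner_diff_left inner_diff_right sab)
  have I2: "ww + uu = 2 * (a \<bullet> (L *v a)) + 2 * (b \<bullet> (L *v b))"
    unfolding uu_def ww_def u_def w_def
    by (simp add: matrix_vector_right_distrib matrix_vector_mult_diff_distrib inner_add_left inner_add_right inner_diff_left inner_diff_right sab)
  have swu: "w \<bullet> (L *v u) = uw" unfolding uw_def by (rule sym)
  have p1: "0 \<le> (t *\<^sub>R u - w) \<bullet> (L *v (t *\<^sub>R u - w))" by (rule psd)
  have p2: "0 \<le> (t *\<^sub>R u + w) \<bullet> (L *v (t *\<^sub>R u + w))" by (rule psd)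
  have e1: "(t *\<^sub>R u - w) \<bullet> (L *v (t *\<^sub>R u - w)) = t * t * uu - 2 * t * uw + ww"
    unfolding uu_def ww_def
    by (simp add: matrix_vector_right_distrib matrix_vector_mult_diff_distrib matrix_vector_mult_scaleR inner_add_left inner_add_right inner_diff_left inner_diff_right swu uw_def algebra_simps)
  have e2: "(t *\<^sub>R u + w) \<bullet> (L *v (t *\<^sub>R u + w)) = t * t * uu + 2 * t * uw + ww"
    unfolding uu_def ww_def
    by (simp add: matrix_vector_right_distrib matrix_vector_mult_diff_distrib matrix_vector_mult_scaleR inner_add_left inner_add_right inner_diff_left inner_diff_right swu uw_def algebra_simps)
  have "2 * t * \<bar>uw\<bar> \<le> t * t * uu + ww" using p1 p2 e1 e2 t by (simp add: abs_if)
  then have "\<bar>uw\<bar> \<le> (t * uu + ww / t) / 2" using t by (simp add: field_simps)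
  moreover have "uu \<ge> 0" unfolding uu_def by (rule psd)
  ultimately have "\<bar>uw\<bar> \<le> (t * uu + (ww + uu) / t) / 2"
    using t by (smt (verit) divide_right_mono)
  then show ?thesis using I1 I2 by (simp add: uu_def u_def)
qed



lemma quad_par:
  fixes L :: "real^'n^'n"
  assumes psd: "\<And>v. v \<bullet> (L *v v) \<ge> 0"
    and sym: "\<And>u v. u \<bullet> (L *v v) = v \<bullet> (L *v u)"
  shows "(a - b) \<bullet> (L *v (a - b)) \<le> 2 * (a \<bullet> (L *v a)) + 2 * (b \<bullet> (L *v b))"
proof -
  have sab: "b \<bullet> (L *v a) = a \<bullet> (L *v b)" by (rule sym)
  have "(a + b) \<bullet> (L *v (a + b)) + (a - b) \<bullet> (L *v (a - b)) = 2 * (a \<bullet> (L *v a)) + 2 * (b \<bullet> (L *v b))"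
    by (simp add: matrix_vector_right_distrib matrix_vector_mult_diff_distrib inner_add_left inner_add_right inner_diff_left inner_diff_right sab)
  moreover have "(a + b) \<bullet> (L *v (a + b)) \<ge> 0" by (rule psd)
  ultimately show ?thesis by linarith
qed

lemma opt_bound:
  fixes X E S :: real
  assumes E: "E \<ge> 0" and S: "S \<ge> 0"
    and H: "\<And>t. t > 0 \<Longrightarrow> X \<le> t * E / 4 + S / t"
  shows "X \<le> sqrt (E * S)"
proof (cases "E > 0 \<and> S > 0")
  case True
  define t where "t = 2 * sqrt S / sqrt E"
  have tp: "t > 0" using True by (simp add: t_def)
  have h1: "t * E / 4 = sqrt S * sqrt E / 2"
    using True by (simp add: t_def field_simps)
  have h2: "S / t = sqrt S * sqrt E / 2"
    using True by (simp add: t_def field_simps)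
  have "X \<le> sqrt S * sqrt E / 2 + sqrt S * sqrt E / 2" using H[OF tp] h1 h2 by linarith
  then show ?thesis by (simp add: real_sqrt_mult mult.commute)
next
  case False
  show ?thesis
  proof (rule ccontr)
    assume "\<not> X \<le> sqrt (E * S)"
    then have Xp: "X > 0" and ES: "E * S = 0" using False E S by auto
    show False
    proof (cases "E = 0")
      case True
      define t where "t = 2 * (S + 1) / X"
      have tp: "t > 0" using Xp S by (simp add: t_def)
      have "X \<le> S / t" using H[OF tp] True by simp
      also have "\<dots> = S * X / (2 * (S + 1))" using Xp S by (simp add: t_def field_simps)
      also have "\<dots> < X" using Xp S by (simp add: field_simps add_nonneg_pos)
      finally show False by simp
    next
      case False
      then have S0: "S = 0" using ES by simp
      have Ep: "E > 0" using False E by simp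
      define t where "t = 2 * X / E"
      have tp: "t > 0" using Xp Ep by (simp add: t_def)
      have "X \<le> t * E / 4" using H[OF tp] S0 by simp
      also have "\<dots> = X / 2" using Ep by (simp add: t_def)
      finally show False using Xp by simp
    qed
  qed
qed



theorem mainTheorem9:
  fixes \<Theta> :: "'b::{banach, second_countable_topology} set"
    and \<mu>\<theta> :: "'b measure"
    and \<mu>\<delta> :: "('b \<Rightarrow> 'u::banach) measure"
    and \<O> :: "'u \<Rightarrow> real^'n"
    and Mdag M :: "'b \<Rightarrow> 'u"
    and \<Sigma> :: "real^'n^'n"
    and y :: "real^'n"
    and \<Phi>dag :: "'b \<Rightarrow> real"
    and \<Phi>joint :: "'b \<times> ('b \<Rightarrow> 'u) \<Rightarrow> real"
  assumes \<Theta>_borel: "\<Theta> \<in> sets borel"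
    and \<mu>\<theta>_sets: "sets \<mu>\<theta> = sets (restrict_space borel \<Theta>)"
    and \<mu>\<theta>_prob: "prob_space \<mu>\<theta>"
    and \<mu>\<delta>_prob: "prob_space \<mu>\<delta>"
    and eval_meas: "(\<lambda>(\<theta>', \<delta>'). \<delta>' \<theta>') \<in> borel_measurable (\<mu>\<theta> \<Otimes>\<^sub>M \<mu>\<delta>)"
    and O_lin: "bounded_linear \<O>"
    and Mdag_meas: "Mdag \<in> borel_measurable \<mu>\<theta>"
    and M_meas: "M \<in> borel_measurable \<mu>\<theta>"
    and \<Sigma>_spd: "spd \<Sigma>"
    and \<Phi>dag_def: "\<And>\<theta>'. \<Phi>dag \<theta>' = 1/2 * (wnorm (matrix_inv \<Sigma>) (y - \<O> (Mdag \<theta>')))\<^sup>2"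
    and \<Phi>joint_def: "\<And>\<theta>' \<delta>'. \<Phi>joint (\<theta>', \<delta>') =
           1/2 * (wnorm (matrix_inv \<Sigma>) (y - \<O> (M \<theta>') - \<O> (\<delta>' \<theta>')))\<^sup>2"
    and \<Phi>dag_L1: "integrable \<mu>\<theta> \<Phi>dag"
    and \<Phi>joint_L1: "integrable (\<mu>\<theta> \<Otimes>\<^sub>M \<mu>\<delta>) \<Phi>joint"
  shows
    "(let \<mu>dag = reweight (\<mu>\<theta> \<Otimes>\<^sub>M \<mu>\<delta>) (\<lambda>(\<theta>', \<delta>'). \<Phi>dag \<theta>');
          \<mu>jt = reweight (\<mu>\<theta> \<Otimes>\<^sub>M \<mu>\<delta>) \<Phi>joint;
          nJ = (\<integral>z. \<bar>\<Phi>joint z\<bar> \<partial>(\<mu>\<theta> \<Otimes>\<^sub>M \<mu>\<delta>));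
          nD = (\<integral>t. \<bar>\<Phi>dag t\<bar> \<partial>\<mu>\<theta>);
          C = sqrt 2 * exp (2 * nJ + 2 * nD) * (sqrt nJ + sqrt nD);
          E = (\<integral>(\<theta>', \<delta>'). \<bar>(wnorm (matrix_inv \<Sigma>)
                   (\<O> ((Mdag \<theta>' - M \<theta>') - \<delta>' \<theta>')))\<^sup>2\<bar> \<partial>(\<mu>\<theta> \<Otimes>\<^sub>M \<mu>\<delta>))
      in max (dKL \<mu>dag \<mu>jt) (dKL \<mu>jt \<mu>dag) \<le> ereal (C * sqrt E))"
proof -
  define \<mu> where "\<mu> = \<mu>\<theta> \<Otimes>\<^sub>M \<mu>\<delta>"
  have prob: "prob_space \<mu>" unfolding \<mu>_def by (rule prob_space_pair[OF \<mu>\<theta>_prob \<mu>\<delta>_prob])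
  interpret prob_space \<mu> by (fact prob)
  define L where "L = matrix_inv \<Sigma>"
  define q where "q v = v \<bullet> (L *v v)" for v
  have psd: "\<And>v. v \<bullet> (L *v v) \<ge> 0" unfolding L_def by (rule spd_inv_props(1)[OF \<Sigma>_spd])
  have sym: "\<And>u v. u \<bullet> (L *v v) = v \<bullet> (L *v u)" unfolding L_def by (rule spd_inv_props(2)[OF \<Sigma>_spd])
  have wq: "(wnorm (matrix_inv \<Sigma>) v)\<^sup>2 = q v" for v using psd[of v] unfolding wnorm_def q_def L_def by simp
  have q0: "q v \<ge> 0" for v unfolding q_def by (rule psd)
  define a where "a z = y - \<O> (M (fst z)) - \<O> (snd z (fst z))" for z
  define b where "b z = y - \<O> (Mdag (fst z))" for z :: "'b \<times> ('b \<Rightarrow> 'u)"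
  define P1 where "P1 z = \<Phi>dag (fst z)" for z :: "'b \<times> ('b \<Rightarrow> 'u)"
  have P1fun: "P1 = (\<lambda>z. \<Phi>dag (fst z))" by (rule ext) (simp add: P1_def)
  have P2eq: "\<Phi>joint z = q (a z) / 2" for z
    using \<Phi>joint_def[of "fst z" "snd z"] by (simp add: a_def wq)
  have P1eq: "P1 z = q (b z) / 2" for z
    using \<Phi>dag_def[of "fst z"] by (simp add: P1_def b_def wq)
  have P1n: "P1 z \<ge> 0" for z using P1eq[of z] q0[of "b z"] by simp
  have P2n: "\<Phi>joint z \<ge> 0" for z using P2eq[of z] q0[of "a z"] by simp
  have Dn: "\<Phi>dag t \<ge> 0" for t using \<Phi>dag_def[of t] zero_le_power2[of "wnorm (matrix_inv \<Sigma>) (y - \<O> (Mdag t))"] by linarith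
  have contO: "continuous_on UNIV \<O>" by (rule linear_continuous_on[OF O_lin])
  have contq: "continuous_on UNIV q" unfolding q_def
    by (intro continuous_intros linear_continuous_on matrix_vector_mul_bounded_linear)
  have mfst: "fst \<in> measurable \<mu> \<mu>\<theta>" unfolding \<mu>_def by (rule measurable_fst)
  have m1: "(\<lambda>z. \<O> (Mdag (fst z))) \<in> borel_measurable \<mu>"
    by (rule borel_measurable_continuous_on[OF contO measurable_compose[OF mfst Mdag_meas]])
  have m2: "(\<lambda>z. \<O> (M (fst z))) \<in> borel_measurable \<mu>"
    by (rule borel_measurable_continuous_on[OF contO measurable_compose[OF mfst M_meas]])
  have ev: "(\<lambda>z. snd z (fst z)) \<in> borel_measurable \<mu>"
    using eval_meas unfolding \<mu>_def by (simp add: split_beta)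
  have m3: "(\<lambda>z. \<O> (snd z (fst z))) \<in> borel_measurable \<mu>"
    by (rule borel_measurable_continuous_on[OF contO ev])
  have mab: "(\<lambda>z. a z - b z) \<in> borel_measurable \<mu>"
    unfolding a_def b_def using m1 m2 m3 by measurable
  have mqab: "(\<lambda>z. q (a z - b z)) \<in> borel_measurable \<mu>"
    by (rule borel_measurable_continuous_on[OF contq mab])
  have iJ: "integrable \<mu> \<Phi>joint" using \<Phi>joint_L1 by (simp add: \<mu>_def)
  have dfst: "distr \<mu> \<mu>\<theta> fst = \<mu>\<theta>"
    unfolding \<mu>_def by (rule prob_space.distr_pair_fst[OF \<mu>\<delta>_prob])
  have Dm: "\<Phi>dag \<in> borel_measurable \<mu>\<theta>" using \<Phi>dag_L1 by auto
  have iP1: "integrable \<mu> P1"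
    using integrable_distr_eq[OF mfst Dm] \<Phi>dag_L1 dfst by (simp add: P1fun)
  have intP1: "(\<integral>z. P1 z \<partial>\<mu>) = (\<integral>t. \<Phi>dag t \<partial>\<mu>\<theta>)"
    using integral_distr[OF mfst Dm] dfst by (simp add: P1fun)
  have iE: "integrable \<mu> (\<lambda>z. q (a z - b z))"
  proof (rule Bochner_Integration.integrable_bound[where f="\<lambda>z. 4 * \<Phi>joint z + 4 * P1 z"])
    show "integrable \<mu> (\<lambda>z. 4 * \<Phi>joint z + 4 * P1 z)" using iJ iP1 by auto
    show "(\<lambda>z. q (a z - b z)) \<in> borel_measurable \<mu>" by (fact mqab)
    show "AE z in \<mu>. norm (q (a z - b z)) \<le> norm (4 * \<Phi>joint z + 4 * P1 z)"
    proof (intro AE_I2)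
      fix z
      have "q (a z - b z) \<le> 2 * q (a z) + 2 * q (b z)"
        unfolding q_def by (rule quad_par[OF psd sym])
      then show "norm (q (a z - b z)) \<le> norm (4 * \<Phi>joint z + 4 * P1 z)"
        using q0[of "a z - b z"] P2eq[of z] P1eq[of z] q0[of "a z"] q0[of "b z"] by simp
    qed
  qed
  define nJ where "nJ = (\<integral>z. \<bar>\<Phi>joint z\<bar> \<partial>\<mu>)"
  define nD where "nD = (\<integral>t. \<bar>\<Phi>dag t\<bar> \<partial>\<mu>\<theta>)"
  define E where "E = (\<integral>z. q (a z - b z) \<partial>\<mu>)"
  define X where "X = (\<integral>z. \<bar>P1 z - \<Phi>joint z\<bar> \<partial>\<mu>)"
  have nJ': "nJ = (\<integral>z. \<Phi>joint z \<partial>\<mu>)" unfolding nJ_def using P2n by simp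
  have nD': "nD = (\<integral>z. P1 z \<partial>\<mu>)" unfolding nD_def intP1 using Dn by simp
  have nJ0: "nJ \<ge> 0" unfolding nJ_def by simp
  have nD0: "nD \<ge> 0" unfolding nD_def by simp
  have E0: "E \<ge> 0" unfolding E_def using q0 by simp
  have X0: "X \<ge> 0" unfolding X_def by simp
  have Eeq: "(\<integral>(\<theta>', \<delta>'). \<bar>(wnorm (matrix_inv \<Sigma>) (\<O> ((Mdag \<theta>' - M \<theta>') - \<delta>' \<theta>')))\<^sup>2\<bar> \<partial>(\<mu>\<theta> \<Otimes>\<^sub>M \<mu>\<delta>)) = E"
  proof -
    have "(\<lambda>(\<theta>', \<delta>'). \<bar>(wnorm (matrix_inv \<Sigma>) (\<O> ((Mdag \<theta>' - M \<theta>') - \<delta>' \<theta>')))\<^sup>2\<bar>)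
          = (\<lambda>z. q (a z - b z))"
    proof (rule ext, clarify)
      fix \<theta>' \<delta>'
      have "\<O> ((Mdag \<theta>' - M \<theta>') - \<delta>' \<theta>') = \<O> (Mdag \<theta>') - \<O> (M \<theta>') - \<O> (\<delta>' \<theta>')"
        using linear_diff[OF bounded_linear.linear[OF O_lin]] by simp
      also have "\<dots> = a (\<theta>', \<delta>') - b (\<theta>', \<delta>')" by (simp add: a_def b_def)
      finally show "\<bar>(wnorm (matrix_inv \<Sigma>) (\<O> ((Mdag \<theta>' - M \<theta>') - \<delta>' \<theta>')))\<^sup>2\<bar> = q (a (\<theta>', \<delta>') - b (\<theta>', \<delta>'))"
        using q0 by (simp add: wq)
    qed
    then show ?thesis by (simp add: E_def \<mu>_def)
  qed
  have XH: "X \<le> t * E / 4 + (nJ + nD) / t" if tp: "t > 0" for t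
  proof -
    have "X \<le> (\<integral>z. t * q (a z - b z) / 4 + (\<Phi>joint z + P1 z) / t \<partial>\<mu>)"
      unfolding X_def
    proof (rule integral_mono)
      show "integrable \<mu> (\<lambda>z. \<bar>P1 z - \<Phi>joint z\<bar>)" using iP1 iJ by auto
      show "integrable \<mu> (\<lambda>z. t * q (a z - b z) / 4 + (\<Phi>joint z + P1 z) / t)" using iE iP1 iJ by auto
      fix z
      have "\<bar>q (a z) - q (b z)\<bar> \<le> (t * q (a z - b z) + (2 * q (a z) + 2 * q (b z)) / t) / 2"
        unfolding q_def by (rule quad_bound[OF psd sym tp])
      then show "\<bar>P1 z - \<Phi>joint z\<bar> \<le> t * q (a z - b z) / 4 + (\<Phi>joint z + P1 z) / t"
      proof -
        have e: "\<bar>P1 z - \<Phi>joint z\<bar> = \<bar>q (a z) - q (b z)\<bar> / 2"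
          unfolding P1eq[of z] P2eq[of z] by (simp add: abs_minus_commute flip: diff_divide_distrib)
        have f: "(\<Phi>joint z + P1 z) / t = ((2 * q (a z) + 2 * q (b z)) / t) / 4"
          unfolding P1eq[of z] P2eq[of z] using tp by (simp add: field_simps)
        have aux: "\<And>A B C::real. A \<le> (B + C) / 2 \<Longrightarrow> A / 2 \<le> B / 4 + C / 4" by (simp add: field_simps)
        show ?thesis unfolding e f using \<open>\<bar>q (a z) - q (b z)\<bar> \<le> _\<close> by (rule aux)
      qed
    qed
    also have "\<dots> = t * E / 4 + (nJ + nD) / t"
      using iE iP1 iJ by (simp add: E_def nJ' nD')
    finally show ?thesis .
  qed
  have Xb: "X \<le> sqrt (E * (nJ + nD))"
    by (rule opt_bound[OF E0 _ XH]) (use nJ0 nD0 in auto)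
  have P1f: "(\<lambda>(\<theta>', \<delta>'). \<Phi>dag \<theta>') = P1" by (auto simp: P1fun)
  have KL1: "dKL (reweight \<mu> P1) (reweight \<mu> \<Phi>joint) \<le> ereal (exp nD * X)"
    using KL_bound[OF prob iP1 iJ P1n P2n] by (simp add: nD' X_def)
  have KL2: "dKL (reweight \<mu> \<Phi>joint) (reweight \<mu> P1) \<le> ereal (exp nJ * X)"
    using KL_bound[OF prob iJ iP1 P2n P1n] by (simp add: nJ' X_def abs_minus_commute)
  define S where "S = nJ + nD"
  have fin: "exp nJ * X \<le> sqrt 2 * exp (2 * nJ + 2 * nD) * (sqrt nJ + sqrt nD) * sqrt E"
       "exp nD * X \<le> sqrt 2 * exp (2 * nJ + 2 * nD) * (sqrt nJ + sqrt nD) * sqrt E"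
  proof -
    have e1: "exp nJ \<le> exp (2 * nJ + 2 * nD)" "exp nD \<le> exp (2 * nJ + 2 * nD)" using nJ0 nD0 by auto
    have s1: "sqrt (nJ + nD) \<le> sqrt nJ + sqrt nD" using nJ0 nD0 by (rule sqrt_add_le_add_sqrt)
    have "X \<le> sqrt E * sqrt (nJ + nD)" using Xb by (simp add: real_sqrt_mult)
    also have "\<dots> \<le> sqrt E * (sqrt nJ + sqrt nD)" using s1 E0 by (intro mult_left_mono) auto
    also have "\<dots> \<le> sqrt 2 * (sqrt nJ + sqrt nD) * sqrt E"
    proof -
      have "1 \<le> sqrt (2::real)" by simp
      then show ?thesis using mult_right_mono[of 1 "sqrt 2" "(sqrt nJ + sqrt nD) * sqrt E"] nJ0 nD0 E0
        by (simp add: mult.commute mult.left_commute)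
    qed
    finally have Xb2: "X \<le> sqrt 2 * (sqrt nJ + sqrt nD) * sqrt E" .
    have pos: "0 \<le> sqrt 2 * (sqrt nJ + sqrt nD) * sqrt E" using nJ0 nD0 E0 by simp
    show "exp nJ * X \<le> sqrt 2 * exp (2 * nJ + 2 * nD) * (sqrt nJ + sqrt nD) * sqrt E"
      using mult_mono[OF e1(1) Xb2 _ X0] pos by (simp add: mult.commute mult.left_commute)
    show "exp nD * X \<le> sqrt 2 * exp (2 * nJ + 2 * nD) * (sqrt nJ + sqrt nD) * sqrt E"
      using mult_mono[OF e1(2) Xb2 _ X0] pos by (simp add: mult.commute mult.left_commute)
  qed
  show ?thesis
    unfolding Let_def Eeq P1f
    using KL1 KL2 fin
    by (simp add: \<mu>_def[symmetric] nJ_def[symmetric] nD_def[symmetric] order_trans[OF _ ereal_less_eq(3)[THEN iffD2]])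
qed


end
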